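(* Assume (A.3). Then there is a finite constant $C_r>0$, independent of $h$, such that for all sufficiently small $h$, $r^2(\hat y_h,\hat u_h)\le C_rh^{2\lambda\eta}$.
   Context: Let $T>0$. $\mathcal{X}$: pairs $(y,u)$ with $y:[0,T]\to\mathbb{R}^{n_y}$, $y\in L^\infty$, $\dot y\in L^2$, $u\in L^\infty([0,T];\mathbb{R}^{n_u})$; $\|(y,u)\|_{\mathcal{X}}=\|\dot y\|_{L^2}+\operatorname{ess\,sup}_t\|(y(t),u(t))\|_\infty$, where $\|\dot y\|_{L^2}=(\int_0^T\|\dot y\|_2^2dt)^{1/2}$. Given $M,b$ on $\mathbb{R}^{n_y}\times\mathbb{R}^{n_y}$ (values in $\mathbb{R}$, $\mathbb{R}^{n_b}$), $f_1,f_2$ on $\mathbb{R}^{n_y}\times\mathbb{R}^{n_u}\times[0,T]$ (values in $\mathbb{R}^{n_y}$, $\mathbb{R}^{n_c}$) and bounds $y_L\le y_R$, $u_L\le u_R$, the optimal control problem minimizes $M(y(0),y(T))$ over $\mathcal{X}$ subject to $b(y(0),y(T))=0$, $\dot y=f_1(y,u,t)$ and $f_2(y,u,t)=0$ a.e., and the bounds for all $t$; $(y^\star,u^\star)$ is a local minimizer. $f(\dot y,y,u,t)=(f_1(y,u,t)-\dot y,f_2(y,u,t))$, $r(y,u)=(\int_0^T\|f(\dot y(t),y(t),u(t),t)\|_2^2dt+\|b(y(0),y(T))\|_2^2)^{1/2}$. Mesh $0=t_1<\dots<t_{N+1}=T$, $h=\max_i(t_{i+1}-t_i)$, degree $p$;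 $\mathcal{X}_{h,p}$: $y_h$ continuous and polynomial of degree $\le p$ on each mesh interval, $u_h$ polynomial of degree $\le p-1$ on each mesh interval; $\mathcal{B}_{h,p}\subset\mathcal{X}_{h,p}$ the pairs satisfying the bounds at the sampling points. (Approximability) there are $h_0,\eta,C_\eta>0$ such that for all $h\le h_0$ there is $(y_h,u_h)\in\mathcal{B}_{h,p}$ with $\|(y^\star,u^\star)-(y_h,u_h)\|_{\mathcal{X}}\le C_\eta h^\eta$; $(\hat y_h,\hat u_h)$ denotes a fixed such pair. (A.3): there are $\lambda\in(0,1]$, $C_\lambda>0$, $\epsilon>0$ with $|M(y^\star(0),y^\star(T))-M(a,a')|\le C_\lambda\|(y^\star(0)-a,y^\star(T)-a')\|_2^\lambda$ and $\|b(y^\star(0),y^\star(T))-b(a,a')\|_2\le C_\lambda\|(y^\star(0)-a,y^\star(T)-a')\|_2^\lambda$ whenever $\|(y^\star(0)-a,y^\star(T)-a')\|_2\le\epsilon$, and for each $t$, $\|(f_1(y^\star(t),u^\star(t),t)-f_1(v,w,t),f_2(y^\star(t),u^\star(t),t)-f_2(v,w,t))\|_2\le C_\lambda\|(y^\star(t)-v,u^\star(t)-w)\|_2^\lambda$ whenever $\|(y^\star(t)-v,u^\star(t)-w)\|_2\le\epsilon$. *)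

theory Defs
  imports "HOL-Analysis.Analysis" "HOL-Probability.Probability"
begin

text \<open>Functions on [0,T] are modelled as total functions real \<Rightarrow> real^'n; only values on
 {0..T} matter. The time derivative of y is carried as a separate function y'
 (weak derivative), linked to y by absolute continuity.\<close>

definition L2sq :: "real \<Rightarrow> (real \<Rightarrow> 'a::real_normed_vector) \<Rightarrow> ennreal" where
  "L2sq T v = (\<integral>\<^sup>+ t\<in>{0..T}. ennreal ((norm (v t))\<^sup>2) \<partial>lborel)"

definition L2norm :: "real \<Rightarrow> (real \<Rightarrow> 'a::real_normed_vector) \<Rightarrow> ereal" where
  "L2norm T v = (if L2sq T v = \<infinity> then \<infinity> else ereal (sqrt (enn2real (L2sq T v))))"

definition Linf_yu :: "real \<Rightarrow> (real \<Rightarrow> real^'ny) \<Rightarrow> (real \<Rightarrow> real^'nu) \<Rightarrow> ereal" where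
  "Linf_yu T y u = esssup (restrict_space lborel {0..T}) (\<lambda>t. ereal (infnorm (y t, u t)))"

definition Xnorm :: "real \<Rightarrow> (real \<Rightarrow> real^'ny) \<Rightarrow> (real \<Rightarrow> real^'ny) \<Rightarrow> (real \<Rightarrow> real^'nu) \<Rightarrow> ereal" where
  "Xnorm T y y' u = L2norm T y' + Linf_yu T y u"

definition weak_deriv :: "real \<Rightarrow> (real \<Rightarrow> real^'n) \<Rightarrow> (real \<Rightarrow> real^'n) \<Rightarrow> bool" where
  "weak_deriv T y y' \<longleftrightarrow>
     y' \<in> borel_measurable (restrict_space lborel {0..T}) \<and> L2sq T y' < \<infinity> \<and>
     (\<forall>t\<in>{0..T}. y t = y 0 + (LINT s:{0..t}|lborel. y' s))"

definition inX :: "real \<Rightarrow> (real \<Rightarrow> real^'ny) \<Rightarrow> (real \<Rightarrow> real^'ny) \<Rightarrow> (real \<Rightarrow> real^'nu) \<Rightarrow> bool" where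
  "inX T y y' u \<longleftrightarrow> weak_deriv T y y' \<and>
     u \<in> borel_measurable (restrict_space lborel {0..T}) \<and>
     esssup (restrict_space lborel {0..T}) (\<lambda>t. ereal (infnorm (u t))) < \<infinity>"

definition feasible ::
  "real \<Rightarrow> (real^'ny \<Rightarrow> real^'ny \<Rightarrow> real^'nb) \<Rightarrow> (real^'ny \<Rightarrow> real^'nu \<Rightarrow> real \<Rightarrow> real^'ny)
   \<Rightarrow> (real^'ny \<Rightarrow> real^'nu \<Rightarrow> real \<Rightarrow> real^'nc) \<Rightarrow> real^'ny \<Rightarrow> real^'ny \<Rightarrow> real^'nu \<Rightarrow> real^'nu
   \<Rightarrow> (real \<Rightarrow> real^'ny) \<Rightarrow> (real \<Rightarrow> real^'ny) \<Rightarrow> (real \<Rightarrow> real^'nu) \<Rightarrow> bool" where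
  "feasible T b f1 f2 yL yR uL uR y y' u \<longleftrightarrow>
     inX T y y' u \<and> b (y 0) (y T) = 0 \<and>
     (AE t in lborel. t \<in> {0..T} \<longrightarrow> y' t = f1 (y t) (u t) t \<and> f2 (y t) (u t) t = 0) \<and>
     (\<forall>t\<in>{0..T}. yL \<le> y t \<and> y t \<le> yR \<and> uL \<le> u t \<and> u t \<le> uR)"

definition local_min ::
  "real \<Rightarrow> (real^'ny \<Rightarrow> real^'ny \<Rightarrow> real) \<Rightarrow> (real^'ny \<Rightarrow> real^'ny \<Rightarrow> real^'nb)
   \<Rightarrow> (real^'ny \<Rightarrow> real^'nu \<Rightarrow> real \<Rightarrow> real^'ny)
   \<Rightarrow> (real^'ny \<Rightarrow> real^'nu \<Rightarrow> real \<Rightarrow> real^'nc) \<Rightarrow> real^'ny \<Rightarrow> real^'ny \<Rightarrow> real^'nu \<Rightarrow> real^'nu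
   \<Rightarrow> (real \<Rightarrow> real^'ny) \<Rightarrow> (real \<Rightarrow> real^'ny) \<Rightarrow> (real \<Rightarrow> real^'nu) \<Rightarrow> bool" where
  "local_min T M b f1 f2 yL yR uL uR ys ys' us \<longleftrightarrow>
     feasible T b f1 f2 yL yR uL uR ys ys' us \<and>
     (\<exists>\<delta>>0. \<forall>y y' u. feasible T b f1 f2 yL yR uL uR y y' u \<and>
        Xnorm T (\<lambda>t. ys t - y t) (\<lambda>t. ys' t - y' t) (\<lambda>t. us t - u t) < ereal \<delta>
        \<longrightarrow> M (ys 0) (ys T) \<le> M (y 0) (y T))"

text \<open>Mesh 0 = t_1 < ... < t_{N+1} = T (1-indexed) and its size h.\<close>
definition is_mesh :: "real \<Rightarrow> nat \<Rightarrow> (nat \<Rightarrow> real) \<Rightarrow> bool" where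
  "is_mesh T N tm \<longleftrightarrow> N \<ge> 1 \<and> tm 1 = 0 \<and> tm (N + 1) = T \<and> (\<forall>i\<in>{1..N}. tm i < tm (Suc i))"

definition mesh_size :: "nat \<Rightarrow> (nat \<Rightarrow> real) \<Rightarrow> real" where
  "mesh_size N tm = Max ((\<lambda>i. tm (Suc i) - tm i) ` {1..N})"

definition poly_on :: "real set \<Rightarrow> nat \<Rightarrow> (real \<Rightarrow> real^'n) \<Rightarrow> bool" where
  "poly_on A d v \<longleftrightarrow> (\<exists>c :: nat \<Rightarrow> real^'n. \<forall>t\<in>A. v t = (\<Sum>k\<le>d. t ^ k *\<^sub>R c k))"

definition X_hp :: "real \<Rightarrow> nat \<Rightarrow> (nat \<Rightarrow> real) \<Rightarrow> nat \<Rightarrow> (real \<Rightarrow> real^'ny) \<Rightarrow> (real \<Rightarrow> real^'nu) \<Rightarrow> bool" where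
  "X_hp T N tm p y u \<longleftrightarrow> continuous_on {0..T} y \<and>
     (\<forall>i\<in>{1..N}. poly_on {tm i..tm (Suc i)} p y) \<and>
     (\<forall>i\<in>{1..N}. poly_on ({tm i..<tm (Suc i)} \<union> (if i = N then {T} else {})) (p - 1) u)"

definition B_hp :: "real \<Rightarrow> nat \<Rightarrow> (nat \<Rightarrow> real) \<Rightarrow> nat \<Rightarrow> real set \<Rightarrow> real^'ny \<Rightarrow> real^'ny \<Rightarrow> real^'nu \<Rightarrow> real^'nu
   \<Rightarrow> (real \<Rightarrow> real^'ny) \<Rightarrow> (real \<Rightarrow> real^'nu) \<Rightarrow> bool" where
  "B_hp T N tm p S yL yR uL uR y u \<longleftrightarrow> X_hp T N tm p y u \<and>
     (\<forall>s\<in>S. yL \<le> y s \<and> y s \<le> yR \<and> uL \<le> u s \<and> u s \<le> uR)"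

definition residual_sq ::
  "real \<Rightarrow> (real^'ny \<Rightarrow> real^'ny \<Rightarrow> real^'nb) \<Rightarrow> (real^'ny \<Rightarrow> real^'nu \<Rightarrow> real \<Rightarrow> real^'ny)
   \<Rightarrow> (real^'ny \<Rightarrow> real^'nu \<Rightarrow> real \<Rightarrow> real^'nc)
   \<Rightarrow> (real \<Rightarrow> real^'ny) \<Rightarrow> (real \<Rightarrow> real^'ny) \<Rightarrow> (real \<Rightarrow> real^'nu) \<Rightarrow> ennreal" where
  "residual_sq T b f1 f2 y y' u =
     (\<integral>\<^sup>+ t\<in>{0..T}. ennreal ((norm (f1 (y t) (u t) t - y' t, f2 (y t) (u t) t))\<^sup>2) \<partial>lborel)
     + ennreal ((norm (b (y 0) (y T)))\<^sup>2)"

end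

theory Submission
  imports Defs
begin
lemma sqpow: "((c::real) * x powr a)^2 = c^2 * x powr (2*a)"
proof -
  have "(c * x powr a)^2 = c^2 * (x powr a)^2" by (simp add: power_mult_distrib)
  also have "(x powr a)^2 = x powr (2*a)" by (cases "x = 0") (simp_all add: powr_power)
  finally show ?thesis .
qed

lemma aux2: "(c::real) = x * y * D \<Longrightarrow> 2 * c * T = (2 * x * y * T) * D"
  by (simp add: mult_ac)

lemma fin_ineq: "(a::real) = P * D \<Longrightarrow> b \<le> D \<Longrightarrow> c \<le> Q * D \<Longrightarrow> a + 2*b + c \<le> (P + 2 + Q) * D"
  by (simp add: distrib_right)

lemma le_1_sq: "(a::real) \<le> 1 + a^2"
proof -
  have "0 \<le> (a-1)^2" by simp
  then have "0 \<le> a*a - 2*a + 1" by (simp add: power2_eq_square algebra_simps)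
  moreover have "0 \<le> a*a" by simp
  ultimately show ?thesis unfolding power2_eq_square by linarith
qed

lemma wd_integrable:
  fixes y y' :: "real \<Rightarrow> real^'n"
  assumes "weak_deriv T y y'" shows "set_integrable lborel {0..T} y'"
proof -
  have m: "y' \<in> borel_measurable (restrict_space lborel {0..T})" and fin: "L2sq T y' < \<infinity>"
    using assms unfolding weak_deriv_def by auto
  have m2: "(\<lambda>x. indicator {0..T} x *\<^sub>R y' x) \<in> borel_measurable lborel"
    using m by (simp add: borel_measurable_restrict_space_iff)
  have m3: "(\<lambda>x. ennreal ((norm (y' x))\<^sup>2)) \<in> borel_measurable (restrict_space lborel {0..T})"
    using m by measurable
  have sets: "{0..T} \<inter> space lborel \<in> sets lborel" by simp
  have m4: "(\<lambda>x. ennreal ((norm (y' x))\<^sup>2) * indicator {0..T} x) \<in> borel_measurable lborel"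
    by (rule borel_measurable_restrict_space_iff_ennreal[OF sets, THEN iffD1, OF m3])
  have "(\<integral>\<^sup>+ x. ennreal (norm (indicator {0..T} x *\<^sub>R y' x)) \<partial>lborel)
      \<le> (\<integral>\<^sup>+ x. indicator {0..T} x + ennreal ((norm (y' x))\<^sup>2) * indicator {0..T} x \<partial>lborel)"
  proof (rule nn_integral_mono)
    fix x
    have "ennreal (norm (y' x)) \<le> ennreal (1 + (norm (y' x))\<^sup>2)"
      by (rule ennreal_leI) (rule le_1_sq)
    also have "\<dots> = 1 + ennreal ((norm (y' x))\<^sup>2)"
      by (subst ennreal_plus) auto
    finally have *: "ennreal (norm (y' x)) \<le> 1 + ennreal ((norm (y' x))\<^sup>2)" .
    show "ennreal (norm (indicator {0..T} x *\<^sub>R y' x))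
      \<le> indicator {0..T} x + ennreal ((norm (y' x))\<^sup>2) * indicator {0..T} x"
      using * by (cases "x \<in> {0..T}") auto
  qed
  also have "\<dots> = (\<integral>\<^sup>+ x. indicator {0..T} x \<partial>lborel) + L2sq T y'"
    unfolding L2sq_def by (rule nn_integral_add) (use m4 in auto)
  also have "\<dots> < \<infinity>" using fin by (simp add: emeasure_lborel_Icc_eq less_top) 
  finally show ?thesis unfolding set_integrable_def
    by (intro integrableI_bounded m2) 
qed

lemma wd_cont:
  fixes y y' :: "real \<Rightarrow> real^'n"
  assumes "weak_deriv T y y'" shows "continuous_on {0..T} y"
proof -
  have si: "set_integrable lborel {0..T} y'" by (rule wd_integrable[OF assms])
  have io: "y' integrable_on {0..T}" using set_borel_integral_eq_integral(1)[OF si] .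
  have c: "continuous_on {0..T} (\<lambda>t. y 0 + integral {0..t} y')"
    by (intro continuous_intros indefinite_integral_continuous_1 io)
  have "\<forall>t\<in>{0..T}. y t = y 0 + integral {0..t} y'"
  proof
    fix t assume t: "t \<in> {0..T}"
    have "set_integrable lborel {0..t} y'"
      by (rule set_integrable_subset[OF si]) (use t in auto)
    then have eq: "(LINT s:{0..t}|lborel. y' s) = integral {0..t} y'"
      by (rule set_borel_integral_eq_integral(2))
    have rep: "\<forall>t\<in>{0..T}. y t = y 0 + (LINT s:{0..t}|lborel. y' s)"
      using assms unfolding weak_deriv_def by blast
    have yt: "y t = y 0 + (LINT s:{0..t}|lborel. y' s)" using rep t by blast
    show "y t = y 0 + integral {0..t} y'" using yt eq by simp
  qed
  then show ?thesis using continuous_on_eq[OF c] by metis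
qed

lemma ae_cont_le:
  fixes g :: "real \<Rightarrow> real"
  assumes "continuous_on {0..T} g" "T > 0" "AE t in lborel. t \<in> {0..T} \<longrightarrow> g t \<le> c" "t0 \<in> {0..T}"
  shows "g t0 \<le> c"
proof (rule ccontr)
  assume "\<not> g t0 \<le> c"
  then have pos: "g t0 - c > 0" by simp
  obtain r where r: "r > 0" "\<forall>t\<in>{0..T}. dist t t0 < r \<longrightarrow> dist (g t) (g t0) < g t0 - c"
    using assms(1) assms(4) pos unfolding continuous_on_iff by metis
  define a where "a = max 0 (t0 - r)"
  define b where "b = min T (t0 + r)"
  have ab: "a < b" using assms r unfolding a_def b_def by auto
  have sub: "\<forall>t\<in>{a<..<b}. t \<in> {0..T} \<and> \<not> g t \<le> c"
  proof
    fix t assume t: "t \<in> {a<..<b}"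
    hence t2: "t \<in> {0..T}" "dist t t0 < r" unfolding a_def b_def dist_real_def by auto
    with r have "dist (g t) (g t0) < g t0 - c" by auto
    then show "t \<in> {0..T} \<and> \<not> g t \<le> c" using t2 unfolding dist_real_def by auto
  qed
  have "AE t in lborel. t \<notin> {a<..<b}"
    using assms(3) by eventually_elim (use sub in auto)
  then have "emeasure lborel {a<..<b} = 0"
    by (subst (asm) AE_iff_measurable[of "{a<..<b}"]) auto
  then show False using ab by simp
qed

lemma sq_sum_le: "((x::real) + y)^2 \<le> 2*x^2 + 2*y^2"
proof -
  have "0 \<le> (x-y)^2" by simp
  then show ?thesis by (simp add: power2_eq_square algebra_simps)
qed


lemma key:
  fixes T :: real
    and M :: "real^'ny \<Rightarrow> real^'ny \<Rightarrow> real"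
    and b :: "real^'ny \<Rightarrow> real^'ny \<Rightarrow> real^'nb"
    and f1 :: "real^'ny \<Rightarrow> real^'nu \<Rightarrow> real \<Rightarrow> real^'ny"
    and f2 :: "real^'ny \<Rightarrow> real^'nu \<Rightarrow> real \<Rightarrow> real^'nc"
    and yL yR :: "real^'ny" and uL uR :: "real^'nu"
    and ys ys' yh yh' :: "real \<Rightarrow> real^'ny" and us uh :: "real \<Rightarrow> real^'nu"
  assumes T: "T > 0"
    and feas: "feasible T b f1 f2 yL yR uL uR ys ys' us"
    and yhc: "continuous_on {0..T} yh"
    and inXh: "inX T yh yh' uh"
    and X: "Xnorm T (\<lambda>t. ys t - yh t) (\<lambda>t. ys' t - yh' t) (\<lambda>t. us t - uh t) \<le> ereal \<delta>"
    and K: "K = sqrt (DIM((real^'ny) \<times> (real^'nu)))"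
    and dl: "0 < \<delta>" "\<delta> \<le> 1" "2 * K * \<delta> \<le> eps"
    and lam: "0 < lam" "lam \<le> 1" "Clam > 0"
    and A3_bd: "\<forall>a a'. norm (ys 0 - a, ys T - a') \<le> eps \<longrightarrow>
                  \<bar>M (ys 0) (ys T) - M a a'\<bar> \<le> Clam * norm (ys 0 - a, ys T - a') powr lam \<and>
                  norm (b (ys 0) (ys T) - b a a') \<le> Clam * norm (ys 0 - a, ys T - a') powr lam"
    and A3_f: "\<forall>t\<in>{0..T}. \<forall>v w. norm (ys t - v, us t - w) \<le> eps \<longrightarrow>
                  norm (f1 (ys t) (us t) t - f1 v w t, f2 (ys t) (us t) t - f2 v w t)
                    \<le> Clam * norm (ys t - v, us t - w) powr lam"
  shows "residual_sq T b f1 f2 yh yh' uh \<le>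
    ennreal ((2 * Clam^2 * K powr (2*lam) * T + 2 + Clam^2 * (2*K) powr (2*lam)) * \<delta> powr (2*lam))"
proof -
  define e where "e = (\<lambda>t. ys' t - yh' t)"
  define R where "R = restrict_space lborel {0..T}"
  have sets: "{0..T} \<inter> space lborel \<in> sets lborel" by simp
  have spR: "space R = {0..T}" unfolding R_def by (simp add: space_restrict_space)
  have RT: "emeasure R (space R) = ennreal T"
    unfolding spR unfolding R_def using T by (subst emeasure_restrict_space) auto
  have c0: "0 < CARD('ny)" by simp
  have c1: "(1::real) \<le> real CARD('ny)" using c0 by simp
  have c2: "1 \<le> real CARD('ny) + real CARD('nu)" using c1 by (simp add: add_increasing2)
  have K0: "K \<ge> 1" unfolding K using c2 by simp
  have Linf0: "0 \<le> Linf_yu T (\<lambda>t. ys t - yh t) (\<lambda>t. us t - uh t)"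
  proof -
    have "esssup R (\<lambda>_. 0::ereal) = 0" by (rule esssup_const) (use RT T in simp)
    moreover have "esssup R (\<lambda>_. 0::ereal) \<le> esssup R (\<lambda>t. ereal (infnorm (ys t - yh t, us t - uh t)))"
      by (rule esssup_mono) (auto simp: infnorm_pos_le)
    ultimately show ?thesis unfolding Linf_yu_def R_def by simp
  qed
  have L0: "0 \<le> L2norm T e" unfolding L2norm_def by auto
  have X': "L2norm T e + Linf_yu T (\<lambda>t. ys t - yh t) (\<lambda>t. us t - uh t) \<le> ereal \<delta>"
    using X unfolding Xnorm_def e_def .
  have "L2norm T e \<le> L2norm T e + Linf_yu T (\<lambda>t. ys t - yh t) (\<lambda>t. us t - uh t)"
    by (rule add_increasing2[OF Linf0 order_refl])
  then have L: "L2norm T e \<le> ereal \<delta>" using X' by (rule order_trans)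
  have "Linf_yu T (\<lambda>t. ys t - yh t) (\<lambda>t. us t - uh t) \<le> L2norm T e + Linf_yu T (\<lambda>t. ys t - yh t) (\<lambda>t. us t - uh t)"
    by (rule add_increasing[OF L0 order_refl])
  then have Li: "Linf_yu T (\<lambda>t. ys t - yh t) (\<lambda>t. us t - uh t) \<le> ereal \<delta>" using X' by (rule order_trans)
  have L2: "L2sq T e \<le> ennreal (\<delta>^2)"
  proof -
    have ne: "L2sq T e \<noteq> \<infinity>" using L by (auto simp: L2norm_def)
    then have "sqrt (enn2real (L2sq T e)) \<le> \<delta>" using L by (simp add: L2norm_def)
    then have le: "enn2real (L2sq T e) \<le> \<delta>^2" by (simp add: real_sqrt_le_iff sqrt_le_D)
    have "L2sq T e = ennreal (enn2real (L2sq T e))" using ne by (simp add: less_top)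
    also have "\<dots> \<le> ennreal (\<delta>^2)" using le by (rule ennreal_leI)
    finally show ?thesis .
  qed
  have Li': "esssup R (\<lambda>t. ereal (infnorm (ys t - yh t, us t - uh t))) \<le> ereal \<delta>"
    using Li unfolding Linf_yu_def R_def .
  have AEinf: "AE t in R. infnorm (ys t - yh t, us t - uh t) \<le> \<delta>"
  proof -
    have "AE t in R. ereal (infnorm (ys t - yh t, us t - uh t))
        \<le> esssup R (\<lambda>t. ereal (infnorm (ys t - yh t, us t - uh t)))"
      by (rule esssup_AE)
    then show ?thesis
    proof eventually_elim
      case (elim t)
      from elim Li' have "ereal (infnorm (ys t - yh t, us t - uh t)) \<le> ereal \<delta>"
        by (rule order_trans)
      then show ?case by simp
    qed
  qed
  have AEn: "AE t in lborel. t \<in> {0..T} \<longrightarrow> norm (ys t - yh t, us t - uh t) \<le> K * \<delta>"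
  proof -
    have "AE t in R. norm (ys t - yh t, us t - uh t) \<le> K * \<delta>"
      using AEinf
    proof eventually_elim
      case (elim t)
      have "norm (ys t - yh t, us t - uh t) \<le> K * infnorm (ys t - yh t, us t - uh t)"
        unfolding K by (rule norm_le_infnorm)
      also have "\<dots> \<le> K * \<delta>" using elim K0 by (intro mult_left_mono) auto
      finally show ?case .
    qed
    then have "AE t in restrict_space lborel {0..T}. norm (ys t - yh t, us t - uh t) \<le> K * \<delta>"
      unfolding R_def .
    then show ?thesis by (rule AE_restrict_space_iff[OF sets, THEN iffD1])
  qed
  have wdys: "weak_deriv T ys ys'" using feas unfolding feasible_def inX_def by (elim conjE)
  have ysc: "continuous_on {0..T} ys" by (rule wd_cont[OF wdys])
  have gc: "continuous_on {0..T} (\<lambda>t. norm (ys t - yh t))"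
    by (intro continuous_intros ysc yhc)
  have AEg: "AE t in lborel. t \<in> {0..T} \<longrightarrow> norm (ys t - yh t) \<le> K * \<delta>"
    using AEn
  proof eventually_elim
    case (elim t)
    show ?case
    proof
      assume "t \<in> {0..T}"
      with elim have "norm (ys t - yh t, us t - uh t) \<le> K * \<delta>" by simp
      with norm_fst_le[of "ys t - yh t" "us t - uh t"] show "norm (ys t - yh t) \<le> K * \<delta>"
        by (rule order_trans)
    qed
  qed
  have b0: "norm (ys 0 - yh 0) \<le> K * \<delta>" by (rule ae_cont_le[OF gc T AEg]) (use T in auto)
  have bT: "norm (ys T - yh T) \<le> K * \<delta>" by (rule ae_cont_le[OF gc T AEg]) (use T in auto)
  have np: "norm (ys 0 - yh 0, ys T - yh T) \<le> 2*K*\<delta>"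
    using norm_Pair_le[of "ys 0 - yh 0" "ys T - yh T"] b0 bT by simp
  have bys: "b (ys 0) (ys T) = 0" using feas unfolding feasible_def by auto
  have bb: "norm (b (yh 0) (yh T)) \<le> Clam * (2*K*\<delta>) powr lam"
  proof -
    have "norm (b (yh 0) (yh T)) = norm (b (ys 0) (ys T) - b (yh 0) (yh T))" using bys by simp
    also have "\<dots> \<le> Clam * norm (ys 0 - yh 0, ys T - yh T) powr lam"
      using A3_bd np dl(3) by auto
    also have "\<dots> \<le> Clam * (2*K*\<delta>) powr lam"
      using np lam by (intro mult_left_mono powr_mono2) auto
    finally show ?thesis .
  qed
  have bsq: "(norm (b (yh 0) (yh T)))^2 \<le> Clam^2 * (2*K) powr (2*lam) * \<delta> powr (2*lam)"
  proof -
    have "(norm (b (yh 0) (yh T)))^2 \<le> (Clam * (2*K*\<delta>) powr lam)^2"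
      using bb by (intro power_mono) auto
    also have "\<dots> = Clam^2 * (2*K*\<delta>) powr (2*lam)" by (rule sqpow)
    also have "\<dots> = Clam^2 * (2*K) powr (2*lam) * \<delta> powr (2*lam)"
      unfolding powr_mult[of "2*K" \<delta> "2*lam"] by (rule mult.assoc[symmetric])
    finally show ?thesis .
  qed
  define c1 where "c1 = Clam * (K*\<delta>) powr lam"
  have c1sq: "c1^2 = Clam^2 * K powr (2*lam) * \<delta> powr (2*lam)"
    unfolding c1_def sqpow powr_mult[of K \<delta> "2*lam"] by (rule mult.assoc[symmetric])
  have AEf: "AE t in lborel. t \<in> {0..T} \<longrightarrow> ys' t = f1 (ys t) (us t) t \<and> f2 (ys t) (us t) t = 0"
    using feas unfolding feasible_def by auto
  have AEF: "AE t in lborel.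
      ennreal ((norm (f1 (yh t) (uh t) t - yh' t, f2 (yh t) (uh t) t))\<^sup>2) * indicator {0..T} t
      \<le> ennreal (2 * c1^2) * indicator {0..T} t + 2 * (ennreal ((norm (e t))\<^sup>2) * indicator {0..T} t)"
    using AEn AEf
  proof eventually_elim
    case (elim t)
    show ?case
    proof (cases "t \<in> {0..T}")
      case False then show ?thesis by simp
    next
      case True
      define P where "P = (f1 (ys t) (us t) t - f1 (yh t) (uh t) t, f2 (ys t) (us t) t - f2 (yh t) (uh t) t)"
      have nd: "norm (ys t - yh t, us t - uh t) \<le> K * \<delta>" using elim True by auto
      have "0 \<le> K * \<delta>" using dl K0 by simp
      then have "K * \<delta> \<le> eps" using dl by linarith
      then have "norm P \<le> Clam * norm (ys t - yh t, us t - uh t) powr lam"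
        using A3_f True nd unfolding P_def by auto
      also have "\<dots> \<le> c1" unfolding c1_def
        using nd lam by (intro mult_left_mono powr_mono2) auto
      finally have nP: "norm P \<le> c1" .
      have eq: "(f1 (yh t) (uh t) t - yh' t, f2 (yh t) (uh t) t) = (e t, 0) - P"
        using elim True unfolding P_def e_def by simp
      have "norm ((e t, 0::real^'nc) - P) \<le> norm (e t, 0::real^'nc) + norm P"
        by (rule norm_triangle_ineq4)
      also have "\<dots> \<le> norm (e t) + c1" using nP by (simp add: norm_Pair)
      finally have n1: "norm (f1 (yh t) (uh t) t - yh' t, f2 (yh t) (uh t) t) \<le> norm (e t) + c1"
        using eq by simp
      have "(norm (f1 (yh t) (uh t) t - yh' t, f2 (yh t) (uh t) t))^2 \<le> (norm (e t) + c1)^2"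
        using n1 by (intro power_mono) auto
      also have "\<dots> \<le> 2 * c1^2 + 2 * (norm (e t))^2" using sq_sum_le[of "norm (e t)" c1] by linarith
      finally have r: "(norm (f1 (yh t) (uh t) t - yh' t, f2 (yh t) (uh t) t))^2 \<le> 2 * c1^2 + 2 * (norm (e t))^2" .
      have "ennreal ((norm (f1 (yh t) (uh t) t - yh' t, f2 (yh t) (uh t) t))^2)
          \<le> ennreal (2 * c1^2 + 2 * (norm (e t))^2)" using r by (rule ennreal_leI)
      also have "\<dots> = ennreal (2 * c1^2) + ennreal (2 * (norm (e t))^2)"
        by (rule ennreal_plus) auto
      also have "ennreal (2 * (norm (e t))^2) = 2 * ennreal ((norm (e t))^2)"
        by (subst ennreal_mult) auto
      finally show ?thesis using True by simp
    qed
  qed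
  have mys: "ys' \<in> borel_measurable R"
    using feas unfolding R_def feasible_def inX_def weak_deriv_def by (elim conjE)
  have myh: "yh' \<in> borel_measurable R"
    using inXh unfolding R_def inX_def weak_deriv_def by (elim conjE)
  have me: "e \<in> borel_measurable R" unfolding e_def by (rule borel_measurable_diff[OF mys myh])
  have cn: "(\<lambda>x::real^'ny. ennreal ((norm x)\<^sup>2)) \<in> borel_measurable borel" by measurable
  have me2: "(\<lambda>t. ennreal ((norm (e t))\<^sup>2)) \<in> borel_measurable R"
    using measurable_compose[OF me cn] by (simp add: o_def)
  have meas: "(\<lambda>t. ennreal ((norm (e t))\<^sup>2) * indicator {0..T} t) \<in> borel_measurable lborel"
    by (rule borel_measurable_restrict_space_iff_ennreal[OF sets, THEN iffD1, OF me2[unfolded R_def]])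
  have int: "(\<integral>\<^sup>+ t\<in>{0..T}. ennreal ((norm (f1 (yh t) (uh t) t - yh' t, f2 (yh t) (uh t) t))\<^sup>2) \<partial>lborel)
     \<le> ennreal (2 * c1^2 * T) + 2 * ennreal (\<delta>^2)"
  proof -
    have "(\<integral>\<^sup>+ t\<in>{0..T}. ennreal ((norm (f1 (yh t) (uh t) t - yh' t, f2 (yh t) (uh t) t))\<^sup>2) \<partial>lborel)
      \<le> (\<integral>\<^sup>+ t. ennreal (2 * c1^2) * indicator {0..T} t + 2 * (ennreal ((norm (e t))\<^sup>2) * indicator {0..T} t) \<partial>lborel)"
      by (rule nn_integral_mono_AE[OF AEF])
    also have "\<dots> = (\<integral>\<^sup>+ t. ennreal (2 * c1^2) * indicator {0..T} t \<partial>lborel) + (\<integral>\<^sup>+ t. 2 * (ennreal ((norm (e t))\<^sup>2) * indicator {0..T} t) \<partial>lborel)"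
      by (rule nn_integral_add) (use meas in auto)
    also have "\<dots> = ennreal (2 * c1^2) * ennreal T + 2 * L2sq T e"
      unfolding L2sq_def using meas T by (simp add: nn_integral_cmult)
    also have "\<dots> \<le> ennreal (2 * c1^2 * T) + 2 * ennreal (\<delta>^2)"
      using L2 T by (intro add_mono mult_left_mono) (auto simp: ennreal_mult)
    finally show ?thesis .
  qed
  have "residual_sq T b f1 f2 yh yh' uh \<le> ennreal (2 * c1^2 * T) + 2 * ennreal (\<delta>^2) + ennreal ((norm (b (yh 0) (yh T)))\<^sup>2)"
    unfolding residual_sq_def by (rule add_mono[OF int order_refl])
  also have "\<dots> = ennreal (2 * c1^2 * T + 2 * \<delta>^2 + (norm (b (yh 0) (yh T)))\<^sup>2)"
  proof -
    have nA: "0 \<le> 2 * c1^2 * T" using T by simp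
    have nB: "0 \<le> 2 * \<delta>^2" by simp
    have e2: "2 * ennreal (\<delta>^2) = ennreal (2*\<delta>^2)" by (subst ennreal_mult) auto
    have s1: "ennreal (2 * c1^2 * T + 2 * \<delta>^2 + (norm (b (yh 0) (yh T)))\<^sup>2)
       = ennreal (2 * c1^2 * T + 2 * \<delta>^2) + ennreal ((norm (b (yh 0) (yh T)))\<^sup>2)"
      by (rule ennreal_plus) (use nA nB in auto)
    have s2: "ennreal (2 * c1^2 * T + 2 * \<delta>^2) = ennreal (2 * c1^2 * T) + ennreal (2 * \<delta>^2)"
      by (rule ennreal_plus[OF nA nB])
    show ?thesis unfolding s1 s2 e2 ..
  qed
  also have "\<dots> \<le> ennreal ((2 * Clam^2 * K powr (2*lam) * T + 2 + Clam^2 * (2*K) powr (2*lam)) * \<delta> powr (2*lam))"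
  proof (rule ennreal_leI)
    have d2: "\<delta>^2 \<le> \<delta> powr (2*lam)"
    proof -
      have "\<delta> powr 2 \<le> \<delta> powr (2*lam)" using dl lam by (intro powr_mono') auto
      then show ?thesis using dl by simp
    qed
    have eqn: "2 * c1^2 * T = (2 * Clam^2 * K powr (2*lam) * T) * \<delta> powr (2*lam)"
      by (rule aux2[OF c1sq])
    show "2 * c1^2 * T + 2 * \<delta>^2 + (norm (b (yh 0) (yh T)))\<^sup>2
        \<le> (2 * Clam^2 * K powr (2*lam) * T + 2 + Clam^2 * (2*K) powr (2*lam)) * \<delta> powr (2*lam)"
      by (rule fin_ineq[OF eqn d2 bsq])
  qed
  finally show ?thesis .
qed

theorem mainTheorem18:
  fixes T :: real
    and M :: "real^'ny \<Rightarrow> real^'ny \<Rightarrow> real"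
    and b :: "real^'ny \<Rightarrow> real^'ny \<Rightarrow> real^'nb"
    and f1 :: "real^'ny \<Rightarrow> real^'nu \<Rightarrow> real \<Rightarrow> real^'ny"
    and f2 :: "real^'ny \<Rightarrow> real^'nu \<Rightarrow> real \<Rightarrow> real^'nc"
    and yL yR :: "real^'ny" and uL uR :: "real^'nu"
    and p :: nat
    and ys ys' :: "real \<Rightarrow> real^'ny" and us :: "real \<Rightarrow> real^'nu"
    and Nm :: "real \<Rightarrow> nat" and tm :: "real \<Rightarrow> nat \<Rightarrow> real" and S :: "real \<Rightarrow> real set"
    and h0 eta Ceta :: real
    and yh yh' :: "real \<Rightarrow> real \<Rightarrow> real^'ny" and uh :: "real \<Rightarrow> real \<Rightarrow> real^'nu"
    and lam Clam eps :: real
  assumes "T > 0" and "yL \<le> yR" and "uL \<le> uR" and "p \<ge> 1"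
    and locmin: "local_min T M b f1 f2 yL yR uL uR ys ys' us"
    and "h0 > 0" and "eta > 0" and "Ceta > 0"
    and meshes: "\<forall>h\<in>{0<..h0}. is_mesh T (Nm h) (tm h) \<and> mesh_size (Nm h) (tm h) = h \<and> S h \<subseteq> {0..T}"
    and approx: "\<forall>h\<in>{0<..h0}. B_hp T (Nm h) (tm h) p (S h) yL yR uL uR (yh h) (uh h) \<and>
                   inX T (yh h) (yh' h) (uh h) \<and>
                   Xnorm T (\<lambda>t. ys t - yh h t) (\<lambda>t. ys' t - yh' h t) (\<lambda>t. us t - uh h t)
                     \<le> ereal (Ceta * h powr eta)"
    and A3_params: "0 < lam" "lam \<le> 1" "Clam > 0" "eps > 0"
    and A3_bd: "\<forall>a a'. norm (ys 0 - a, ys T - a') \<le> eps \<longrightarrow>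
                  \<bar>M (ys 0) (ys T) - M a a'\<bar> \<le> Clam * norm (ys 0 - a, ys T - a') powr lam \<and>
                  norm (b (ys 0) (ys T) - b a a') \<le> Clam * norm (ys 0 - a, ys T - a') powr lam"
    and A3_f: "\<forall>t\<in>{0..T}. \<forall>v w. norm (ys t - v, us t - w) \<le> eps \<longrightarrow>
                  norm (f1 (ys t) (us t) t - f1 v w t, f2 (ys t) (us t) t - f2 v w t)
                    \<le> Clam * norm (ys t - v, us t - w) powr lam"
  shows "\<exists>Cr>0. \<exists>h1\<in>{0<..h0}. \<forall>h\<in>{0<..h1}.
           residual_sq T b f1 f2 (yh h) (yh' h) (uh h) \<le> ennreal (Cr * h powr (2 * lam * eta))"
proof -
  define K where "K = sqrt (DIM((real^'ny) \<times> (real^'nu)))"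
  have c0: "0 < CARD('ny)" by simp
  have c1: "(1::real) \<le> real CARD('ny)" using c0 by simp
  have c2: "1 \<le> real CARD('ny) + real CARD('nu)" using c1 by (simp add: add_increasing2)
  have K0: "K \<ge> 1" unfolding K_def using c2 by simp
  define m where "m = min 1 (eps / (2*K))"
  have m0: "m > 0" unfolding m_def using K0 A3_params by auto
  define h1 where "h1 = min h0 ((m / Ceta) powr (1/eta))"
  have h1pos: "h1 > 0" unfolding h1_def using m0 assms by auto
  have h1: "h1 \<in> {0<..h0}" using h1pos unfolding h1_def by auto
  define A where "A = 2 * Clam^2 * K powr (2*lam) * T + 2 + Clam^2 * (2*K) powr (2*lam)"
  have A0: "A > 0" unfolding A_def using assms by (intro add_pos_nonneg add_nonneg_pos) auto
  define Cr where "Cr = A * Ceta powr (2*lam)"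
  have Cr0: "Cr > 0" unfolding Cr_def using A0 assms by simp
  have main: "residual_sq T b f1 f2 (yh h) (yh' h) (uh h) \<le> ennreal (Cr * h powr (2 * lam * eta))"
    if h: "h \<in> {0<..h1}" for h
  proof -
    have hh0: "h \<in> {0<..h0}" using h h1 by auto
    define \<delta> where "\<delta> = Ceta * h powr eta"
    have d0: "\<delta> > 0" unfolding \<delta>_def using h assms by simp
    have "h powr eta \<le> h1 powr eta" using h assms by (intro powr_mono2) auto
    also have "\<dots> \<le> ((m / Ceta) powr (1/eta)) powr eta"
      unfolding h1_def using h1pos assms by (intro powr_mono2) auto
    also have "\<dots> = m / Ceta" using m0 assms by (simp add: powr_powr)
    finally have "h powr eta \<le> m / Ceta" .
    then have dm: "\<delta> \<le> m" unfolding \<delta>_def using assms by (simp add: field_simps)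
    then have d1: "\<delta> \<le> 1" unfolding m_def by simp
    have "\<delta> \<le> eps / (2*K)" using dm unfolding m_def by simp
    then have d2: "2 * K * \<delta> \<le> eps" using K0 by (simp add: field_simps)
    have feas: "feasible T b f1 f2 yL yR uL uR ys ys' us"
      using locmin unfolding local_min_def by blast
    have ap: "B_hp T (Nm h) (tm h) p (S h) yL yR uL uR (yh h) (uh h)"
      "inX T (yh h) (yh' h) (uh h)"
      "Xnorm T (\<lambda>t. ys t - yh h t) (\<lambda>t. ys' t - yh' h t) (\<lambda>t. us t - uh h t) \<le> ereal \<delta>"
      using approx hh0 unfolding \<delta>_def by auto
    have yc: "continuous_on {0..T} (yh h)" using ap(1) unfolding B_hp_def X_hp_def by blast
    have "residual_sq T b f1 f2 (yh h) (yh' h) (uh h) \<le> ennreal (A * \<delta> powr (2*lam))"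
      unfolding A_def
      by (rule key[OF assms(1) feas yc ap(2) ap(3) K_def d0 d1 d2 A3_params(1,2,3) A3_bd A3_f])
    also have "A * \<delta> powr (2*lam) = Cr * h powr (2 * lam * eta)"
      unfolding Cr_def \<delta>_def using assms h by (simp add: powr_mult powr_powr mult_ac)
    finally show ?thesis .
  qed
  show ?thesis using Cr0 h1 main by blast
qed

end
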